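(* Let $R$ be a ring such that $R/J(R)$ is an abelian $\pi$-regular ring. Then $R$ is feckly clean.
   Context: Rings are associative with identity, not necessarily commutative; $J(R)$ is the Jacobson radical. A ring is abelian if all its idempotents are central. A ring $S$ is $\pi$-regular if for every $a\in S$ there is $n\in\mathbb{N}$ with $a^n\in a^nSa^n$. An element $u\in R$ is full if $RuR=R$. An element $a\in R$ is feckly clean if there exist $e\in R$ and a full element $u\in R$ with $a=e+u$ and $eR(1-e)\subseteq J(R)$; $R$ is feckly clean if every element is feckly clean. *)

theory Defs
  imports "HOL-Algebra.Algebra"
begin

definition left_ideal :: "'a set \<Rightarrow> ('a, 'b) ring_scheme \<Rightarrow> bool" where
  "left_ideal I R \<longleftrightarrow> additive_subgroup I R \<and>
     (\<forall>a \<in> carrier R. \<forall>x \<in> I. a \<otimes>\<^bsub>R\<^esub> x \<in> I)"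

definition maximal_left_ideal :: "'a set \<Rightarrow> ('a, 'b) ring_scheme \<Rightarrow> bool" where
  "maximal_left_ideal I R \<longleftrightarrow> left_ideal I R \<and> I \<noteq> carrier R \<and>
     (\<forall>L. left_ideal L R \<and> I \<subseteq> L \<longrightarrow> L = I \<or> L = carrier R)"

definition jacobson :: "('a, 'b) ring_scheme \<Rightarrow> 'a set" where
  "jacobson R = carrier R \<inter> \<Inter>{I. maximal_left_ideal I R}"

definition abelian_ring :: "('a, 'b) ring_scheme \<Rightarrow> bool" where
  "abelian_ring S \<longleftrightarrow> (\<forall>e \<in> carrier S. e \<otimes>\<^bsub>S\<^esub> e = e \<longrightarrow>
     (\<forall>x \<in> carrier S. e \<otimes>\<^bsub>S\<^esub> x = x \<otimes>\<^bsub>S\<^esub> e))"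

definition pi_regular :: "('a, 'b) ring_scheme \<Rightarrow> bool" where
  "pi_regular S \<longleftrightarrow> (\<forall>a \<in> carrier S. \<exists>n::nat. n > 0 \<and>
     (\<exists>b \<in> carrier S. a [^]\<^bsub>S\<^esub> n = a [^]\<^bsub>S\<^esub> n \<otimes>\<^bsub>S\<^esub> b \<otimes>\<^bsub>S\<^esub> a [^]\<^bsub>S\<^esub> n))"

text \<open>u is full if RuR = R, i.e. the two-sided ideal generated by u is R.\<close>
definition full_elem :: "('a, 'b) ring_scheme \<Rightarrow> 'a \<Rightarrow> bool" where
  "full_elem R u \<longleftrightarrow> u \<in> carrier R \<and> Idl\<^bsub>R\<^esub> {u} = carrier R"

definition feckly_clean_elem :: "('a, 'b) ring_scheme \<Rightarrow> 'a \<Rightarrow> bool" where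
  "feckly_clean_elem R a \<longleftrightarrow> (\<exists>e \<in> carrier R. \<exists>u \<in> carrier R.
     a = e \<oplus>\<^bsub>R\<^esub> u \<and> full_elem R u \<and>
     (\<forall>r \<in> carrier R. e \<otimes>\<^bsub>R\<^esub> r \<otimes>\<^bsub>R\<^esub> (\<one>\<^bsub>R\<^esub> \<ominus>\<^bsub>R\<^esub> e) \<in> jacobson R))"

definition feckly_clean :: "('a, 'b) ring_scheme \<Rightarrow> bool" where
  "feckly_clean R \<longleftrightarrow> (\<forall>a \<in> carrier R. feckly_clean_elem R a)"

end

theory Submission
  imports Defs
begin


context ring begin

lemma left_idealI:
  assumes "I \<subseteq> carrier R" "\<zero> \<in> I" "\<And>a b. a \<in> I \<Longrightarrow> b \<in> I \<Longrightarrow> a \<oplus> b \<in> I"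
    "\<And>a x. a \<in> carrier R \<Longrightarrow> x \<in> I \<Longrightarrow> a \<otimes> x \<in> I"
  shows "left_ideal I R"
proof -
  have neg: "\<ominus> x \<in> I" if "x \<in> I" for x
  proof -
    have xc: "x \<in> carrier R" using that assms(1) by auto
    have "\<ominus> x = (\<ominus> \<one>) \<otimes> x" using xc by (simp add: l_minus)
    thus ?thesis using assms(4) that by simp
  qed
  have "subgroup I (add_monoid R)"
    apply (rule subgroup.intro)
    using assms neg by (auto simp: a_inv_def)
  thus ?thesis unfolding left_ideal_def using assms(4) by (auto intro: additive_subgroupI)
qed

lemma left_idealD:
  assumes "left_ideal I R"
  shows "I \<subseteq> carrier R" "\<zero> \<in> I" "\<And>a b. a \<in> I \<Longrightarrow> b \<in> I \<Longrightarrow> a \<oplus> b \<in> I"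
    "\<And>a. a \<in> I \<Longrightarrow> \<ominus> a \<in> I"
    "\<And>a x. a \<in> carrier R \<Longrightarrow> x \<in> I \<Longrightarrow> a \<otimes> x \<in> I"
  using assms unfolding left_ideal_def
  by (auto dest: additive_subgroup.a_subset additive_subgroup.zero_closed
      additive_subgroup.a_closed additive_subgroup.a_inv_closed)

lemma left_ideal_minus:
  assumes "left_ideal I R" "a \<in> I" "b \<in> I" shows "a \<ominus> b \<in> I"
  using left_idealD[OF assms(1)] assms by (simp add: a_minus_def)

lemma left_ideal_one:
  assumes "left_ideal I R" "\<one> \<in> I" shows "I = carrier R"
proof -
  have "x \<in> I" if "x \<in> carrier R" for x
    using left_idealD(5)[OF assms(1) that assms(2)] that by simp
  thus ?thesis using left_idealD(1)[OF assms(1)] by blast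
qed

lemma colon_left_ideal:
  assumes "left_ideal M R" "r \<in> carrier R"
  shows "left_ideal {x \<in> carrier R. x \<otimes> r \<in> M} R"
proof (rule left_idealI)
  note D = left_idealD[OF assms(1)]
  show "\<zero> \<in> {x \<in> carrier R. x \<otimes> r \<in> M}" using assms D by simp
  show "a \<oplus> b \<in> {x \<in> carrier R. x \<otimes> r \<in> M}" if "a \<in> {x \<in> carrier R. x \<otimes> r \<in> M}" "b \<in> {x \<in> carrier R. x \<otimes> r \<in> M}" for a b
    using that assms D by (simp add: l_distr)
  show "a \<otimes> x \<in> {x \<in> carrier R. x \<otimes> r \<in> M}" if "a \<in> carrier R" "x \<in> {x \<in> carrier R. x \<otimes> r \<in> M}" for a x
    using that assms D by (simp add: m_assoc)
qed auto

lemma sum_left_ideal: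
  assumes "left_ideal M R" "c \<in> carrier R"
  shows "left_ideal {m \<oplus> y \<otimes> c | m y. m \<in> M \<and> y \<in> carrier R} R"
proof (rule left_idealI)
  note D = left_idealD[OF assms(1)]
  show "{m \<oplus> y \<otimes> c | m y. m \<in> M \<and> y \<in> carrier R} \<subseteq> carrier R" using D(1) assms by auto
  show "\<zero> \<in> {m \<oplus> y \<otimes> c | m y. m \<in> M \<and> y \<in> carrier R}"
    proof -
    have "\<zero> = \<zero> \<oplus> \<zero> \<otimes> c" using assms by simp
    thus ?thesis using D(2) by blast
  qed
  show "a \<oplus> b \<in> {m \<oplus> y \<otimes> c | m y. m \<in> M \<and> y \<in> carrier R}"
    if ha: "a \<in> {m \<oplus> y \<otimes> c | m y. m \<in> M \<and> y \<in> carrier R}" and hb: "b \<in> {m \<oplus> y \<otimes> c | m y. m \<in> M \<and> y \<in> carrier R}" for a b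
  proof -
    obtain m1 y1 where h1: "a = m1 \<oplus> y1 \<otimes> c" "m1 \<in> M" "y1 \<in> carrier R" using ha by blast
    obtain m2 y2 where h2: "b = m2 \<oplus> y2 \<otimes> c" "m2 \<in> M" "y2 \<in> carrier R" using hb by blast
    note h = h1 h2
    have c: "m1 \<in> carrier R" "m2 \<in> carrier R" using h D(1) by auto
    have e1: "(y1 \<oplus> y2) \<otimes> c = y1 \<otimes> c \<oplus> y2 \<otimes> c" using h assms(2) by (simp add: l_distr)
    have "a \<oplus> b = (m1 \<oplus> m2) \<oplus> (y1 \<otimes> c \<oplus> y2 \<otimes> c)" using h c assms(2) by (simp add: a_ac)
    hence "a \<oplus> b = (m1 \<oplus> m2) \<oplus> (y1 \<oplus> y2) \<otimes> c" using e1 by simp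
    moreover have "m1 \<oplus> m2 \<in> M" using h D(3) by blast
    moreover have "y1 \<oplus> y2 \<in> carrier R" using h by simp
    ultimately show ?thesis by blast
  qed
  show "a \<otimes> x \<in> {m \<oplus> y \<otimes> c | m y. m \<in> M \<and> y \<in> carrier R}"
    if ha: "a \<in> carrier R" and hx: "x \<in> {m \<oplus> y \<otimes> c | m y. m \<in> M \<and> y \<in> carrier R}" for a x
  proof -
    obtain m y where h: "x = m \<oplus> y \<otimes> c" "m \<in> M" "y \<in> carrier R" using hx by blast
    have c: "m \<in> carrier R" using h D(1) by auto
    have "a \<otimes> x = a \<otimes> m \<oplus> a \<otimes> (y \<otimes> c)" using h c assms(2) ha by (simp add: r_distr)
    also have "\<dots> = a \<otimes> m \<oplus> (a \<otimes> y) \<otimes> c" using h c assms(2) ha by (simp add: m_assoc)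
    finally have "a \<otimes> x = a \<otimes> m \<oplus> (a \<otimes> y) \<otimes> c" .
    moreover have "a \<otimes> m \<in> M" using h D(5) ha by blast
    moreover have "a \<otimes> y \<in> carrier R" using h ha by simp
    ultimately show ?thesis by blast
  qed
qed

end


context ring begin

lemma colon_maximal:
  assumes M: "maximal_left_ideal M R" and r: "r \<in> carrier R" "r \<notin> M"
  shows "maximal_left_ideal {x \<in> carrier R. x \<otimes> r \<in> M} R"
proof -
  let ?L = "{x \<in> carrier R. x \<otimes> r \<in> M}"
  have Ml: "left_ideal M R" and Mne: "M \<noteq> carrier R"
    and Mmax: "\<And>L. left_ideal L R \<Longrightarrow> M \<subseteq> L \<Longrightarrow> L = M \<or> L = carrier R"
    using M unfolding maximal_left_ideal_def by auto
  note D = left_idealD[OF Ml]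
  have Ll: "left_ideal ?L R" by (rule colon_left_ideal[OF Ml r(1)])
  have "\<one> \<notin> ?L" using r by simp
  hence Lne: "?L \<noteq> carrier R" by auto
  have "L' = ?L \<or> L' = carrier R" if L': "left_ideal L' R" "?L \<subseteq> L'" for L'
  proof (cases "L' = ?L")
    case False
    then obtain x where x: "x \<in> L'" "x \<notin> ?L" using L' by blast
    have xc: "x \<in> carrier R" using x(1) left_idealD(1)[OF L'(1)] by blast
    hence xr: "x \<otimes> r \<notin> M" using x(2) by blast
    let ?K = "{m \<oplus> y \<otimes> (x \<otimes> r) | m y. m \<in> M \<and> y \<in> carrier R}"
    have Kl: "left_ideal ?K R" by (rule sum_left_ideal[OF Ml]) (use xc r in simp)
    have "M \<subseteq> ?K"
    proof
      fix m assume "m \<in> M"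
      moreover have "m = m \<oplus> \<zero> \<otimes> (x \<otimes> r)" using \<open>m \<in> M\<close> D(1) xc r by auto
      ultimately show "m \<in> ?K" by blast
    qed
    moreover have "x \<otimes> r \<in> ?K"
    proof -
      have "x \<otimes> r = \<zero> \<oplus> \<one> \<otimes> (x \<otimes> r)" using xc r by simp
      thus ?thesis using D(2) by blast
    qed
    ultimately have "?K \<noteq> M" using xr by blast
    hence "?K = carrier R" using Mmax[OF Kl \<open>M \<subseteq> ?K\<close>] by blast
    have "z \<in> L'" if zc: "z \<in> carrier R" for z
    proof -
      have "z \<otimes> r \<in> ?K" using \<open>?K = carrier R\<close> zc r by simp
      then obtain m y where my: "z \<otimes> r = m \<oplus> y \<otimes> (x \<otimes> r)" "m \<in> M" "y \<in> carrier R" by blast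
      have mc: "m \<in> carrier R" using my D(1) by blast
      have "(z \<ominus> y \<otimes> x) \<otimes> r = z \<otimes> r \<ominus> y \<otimes> (x \<otimes> r)"
        using zc my(3) xc r by algebra
      also have "\<dots> = (m \<oplus> y \<otimes> (x \<otimes> r)) \<ominus> y \<otimes> (x \<otimes> r)" using my(1) by simp
      also have "\<dots> = m" using my(3) mc xc r by algebra
      finally have "(z \<ominus> y \<otimes> x) \<otimes> r \<in> M" using my(2) by simp
      hence "z \<ominus> y \<otimes> x \<in> ?L" using zc my(3) xc by simp
      hence a: "z \<ominus> y \<otimes> x \<in> L'" using L'(2) by blast
      have b: "y \<otimes> x \<in> L'" using left_idealD(5)[OF L'(1) my(3) x(1)] .
      have "z = (z \<ominus> y \<otimes> x) \<oplus> y \<otimes> x" using zc my(3) xc by algebra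
      thus ?thesis using left_idealD(3)[OF L'(1) a b] by simp
    qed
    hence "L' = carrier R" using left_idealD(1)[OF L'(1)] by blast
    thus ?thesis by blast
  qed simp
  thus ?thesis unfolding maximal_left_ideal_def using Ll Lne by blast
qed

lemma jac_left_ideal: "left_ideal (jacobson R) R"
proof (rule left_idealI)
  show "jacobson R \<subseteq> carrier R" unfolding jacobson_def by blast
  show "\<zero> \<in> jacobson R" unfolding jacobson_def maximal_left_ideal_def
    using left_idealD(2) by blast
  show "a \<oplus> b \<in> jacobson R" if "a \<in> jacobson R" "b \<in> jacobson R" for a b
    using that left_idealD(3) unfolding jacobson_def maximal_left_ideal_def by auto
  show "a \<otimes> x \<in> jacobson R" if "a \<in> carrier R" "x \<in> jacobson R" for a x
    using that left_idealD(5) unfolding jacobson_def maximal_left_ideal_def by auto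
qed

lemma jac_r_closed:
  assumes j: "j \<in> jacobson R" and r: "r \<in> carrier R"
  shows "j \<otimes> r \<in> jacobson R"
proof -
  have jc: "j \<in> carrier R" using j unfolding jacobson_def by blast
  have "j \<otimes> r \<in> M" if M: "maximal_left_ideal M R" for M
  proof (cases "r \<in> M")
    case True
    then show ?thesis using M left_idealD(5)[OF _ jc True] unfolding maximal_left_ideal_def by blast
  next
    case False
    have "maximal_left_ideal {x \<in> carrier R. x \<otimes> r \<in> M} R" by (rule colon_maximal[OF M r False])
    hence "j \<in> {x \<in> carrier R. x \<otimes> r \<in> M}" using j unfolding jacobson_def by blast
    thus ?thesis by blast
  qed
  thus ?thesis using jc r unfolding jacobson_def by auto
qed

lemma jac_ideal: "ideal (jacobson R) R"
proof -
  have "additive_subgroup (jacobson R) R" using jac_left_ideal unfolding left_ideal_def by blast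
  moreover have "ideal_axioms (jacobson R) R"
    by (rule ideal_axioms.intro) (use left_idealD(5)[OF jac_left_ideal] jac_r_closed in auto)
  ultimately show ?thesis by (intro ideal.intro) (auto intro: ring_axioms)
qed

lemma exists_maximal_left_ideal:
  assumes I: "left_ideal I R" and one: "\<one> \<notin> I"
  shows "\<exists>M. maximal_left_ideal M R \<and> I \<subseteq> M"
proof -
  define P where "P = {L. left_ideal L R \<and> I \<subseteq> L \<and> \<one> \<notin> L}"
  have "\<forall>C\<in>chains P. \<exists>UU\<in>P. \<forall>XX\<in>C. XX \<subseteq> UU"
  proof
    fix C assume C: "C \<in> chains P"
    show "\<exists>UU\<in>P. \<forall>XX\<in>C. XX \<subseteq> UU"
    proof (cases "C = {}")
      case True
      then show ?thesis using I one unfolding P_def by blast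
    next
      case False
      have CP: "C \<subseteq> P" using chainsD2[OF C] .
      have Cl: "\<And>Y. Y \<in> C \<Longrightarrow> left_ideal Y R" using CP unfolding P_def by blast
      have "left_ideal (\<Union>C) R"
      proof (rule left_idealI)
        show "\<Union>C \<subseteq> carrier R" using left_idealD(1)[OF Cl] by blast
        obtain Y0 where "Y0 \<in> C" using False by blast
        thus "\<zero> \<in> \<Union>C" using left_idealD(2)[OF Cl] by blast
        show "a \<oplus> b \<in> \<Union>C" if hab: "a \<in> \<Union>C" "b \<in> \<Union>C" for a b
        proof -
          obtain A B where AB: "A \<in> C" "B \<in> C" "a \<in> A" "b \<in> B" using hab by blast
          show ?thesis
          proof (cases "A \<subseteq> B")
            case True
            then show ?thesis using left_idealD(3)[OF Cl[OF AB(2)], of a b] AB by blast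
          next
            case False
            hence "B \<subseteq> A" using chainsD[OF C AB(1) AB(2)] by blast
            then show ?thesis using left_idealD(3)[OF Cl[OF AB(1)], of a b] AB by blast
          qed
        qed
        show "a \<otimes> x \<in> \<Union>C" if "a \<in> carrier R" "x \<in> \<Union>C" for a x
          using that left_idealD(5)[OF Cl] by blast
      qed
      moreover have "I \<subseteq> \<Union>C" using False CP unfolding P_def by blast
      moreover have "\<one> \<notin> \<Union>C" using CP unfolding P_def by blast
      ultimately show ?thesis unfolding P_def by blast
    qed
  qed
  from Zorn_Lemma2[OF this] obtain M where M: "M \<in> P" "\<forall>Y\<in>P. M \<subseteq> Y \<longrightarrow> Y = M" by blast
  have "maximal_left_ideal M R"
    unfolding maximal_left_ideal_def
  proof (intro conjI allI impI)
    show "left_ideal M R" using M unfolding P_def by blast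
    show "M \<noteq> carrier R" using M unfolding P_def by blast
    fix L assume L: "left_ideal L R \<and> M \<subseteq> L"
    show "L = M \<or> L = carrier R"
    proof (cases "\<one> \<in> L")
      case True thus ?thesis using left_ideal_one L by blast
    next
      case False
      hence "L \<in> P" using L M(1) unfolding P_def by blast
      thus ?thesis using M(2) L by blast
    qed
  qed
  thus ?thesis using M(1) unfolding P_def by blast
qed

end


primrec geo :: "('a, 'b) ring_scheme \<Rightarrow> 'a \<Rightarrow> nat \<Rightarrow> 'a" where
  "geo R N 0 = \<zero>\<^bsub>R\<^esub>"
| "geo R N (Suc k) = geo R N k \<oplus>\<^bsub>R\<^esub> N [^]\<^bsub>R\<^esub> k"

context ring begin

lemma geo_closed: "N \<in> carrier R \<Longrightarrow> geo R N k \<in> carrier R"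
  by (induction k) auto

lemma geo_eq: assumes N: "N \<in> carrier R" shows "(\<one> \<ominus> N) \<otimes> geo R N k = \<one> \<ominus> N [^] k"
proof (induction k)
  case 0 then show ?case using N by (simp, algebra)
next
  case (Suc k)
  have g: "geo R N k \<in> carrier R" using geo_closed N by blast
  have p: "N [^] k \<in> carrier R" using N by simp
  have "(\<one> \<ominus> N) \<otimes> geo R N (Suc k) = (\<one> \<ominus> N) \<otimes> geo R N k \<oplus> (\<one> \<ominus> N) \<otimes> N [^] k"
    using g p N by (simp add: r_distr)
  also have "\<dots> = (\<one> \<ominus> N [^] k) \<oplus> (\<one> \<ominus> N) \<otimes> N [^] k" using Suc by simp
  also have "\<dots> = \<one> \<ominus> N \<otimes> N [^] k" using p N by algebra
  also have "N \<otimes> N [^] k = N [^] Suc k" by (rule nat_pow_Suc2[OF N, symmetric])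
  finally show ?case .
qed

lemma nilp_inv:
  assumes N: "N \<in> carrier R" and "N [^] (n::nat) = \<zero>"
  shows "\<exists>G\<in>carrier R. (\<one> \<ominus> N) \<otimes> G = \<one>"
  using geo_eq[OF N, of n] geo_closed[OF N, of n] assms(2) by (force simp: minus_eq)

lemma decomp:
  assumes ab: "abelian_ring R" and pr: "pi_regular R" and x: "x \<in> carrier R"
  shows "\<exists>F\<in>carrier R. \<exists>V\<in>carrier R. \<exists>W\<in>carrier R. x = F \<oplus> V \<and> V \<otimes> W = \<one> \<and>
           (\<forall>y\<in>carrier R. F \<otimes> y \<otimes> (\<one> \<ominus> F) = \<zero>)"
proof -
  obtain n :: nat and b where nb: "n > 0" "b \<in> carrier R" "x [^] n = x [^] n \<otimes> b \<otimes> x [^] n"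
    using pr x unfolding pi_regular_def by blast
  obtain m where m: "n = Suc m" using nb(1) not0_implies_Suc by blast
  define p where "p = x [^] n"
  have pc: "p \<in> carrier R" using x p_def by simp
  define e where "e = p \<otimes> b"
  have ec: "e \<in> carrier R" using pc nb(2) e_def by simp
  have pbp: "p \<otimes> b \<otimes> p = p" using nb(3) p_def by simp
  have ee: "e \<otimes> e = e"
  proof -
    have "e \<otimes> e = (p \<otimes> b \<otimes> p) \<otimes> b" using pc nb(2) e_def by (simp add: m_assoc)
    thus ?thesis using pbp e_def by simp
  qed
  have ecent: "\<And>y. y \<in> carrier R \<Longrightarrow> e \<otimes> y = y \<otimes> e" using ab ec ee unfolding abelian_ring_def by blast
  define f where "f = \<one> \<ominus> e"
  have fc: "f \<in> carrier R" using ec f_def by simp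
  have fcent: "f \<otimes> y = y \<otimes> f" if y: "y \<in> carrier R" for y
  proof -
    have "f \<otimes> y = y \<ominus> e \<otimes> y" using y ec f_def by algebra
    also have "\<dots> = y \<ominus> y \<otimes> e" using ecent[OF y] by simp
    also have "\<dots> = y \<otimes> f" using y ec f_def by (simp add: ring_simprules r_one)
    finally show ?thesis .
  qed
  have ff: "f \<otimes> f = f"
  proof -
    have "f \<otimes> f = \<one> \<ominus> e \<ominus> e \<oplus> e \<otimes> e" using ec f_def by (simp add: ring_simprules r_one)
    thus ?thesis using ee ec f_def by (simp, algebra)
  qed
  have fe: "f \<otimes> e = \<zero>"
  proof -
    have "f \<otimes> e = e \<ominus> e \<otimes> e" using ec f_def by algebra
    thus ?thesis using ee ec by simp
  qed
  have ep: "e \<otimes> p = p" using pbp e_def by simp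
  have fp: "f \<otimes> p = \<zero>"
  proof -
    have "f \<otimes> p = p \<ominus> e \<otimes> p" using ec pc f_def by algebra
    thus ?thesis using ep pc by simp
  qed
  define N where "N = f \<otimes> x"
  have Nc: "N \<in> carrier R" using N_def fc x by simp
  have Npow: "N [^] Suc k = f \<otimes> x [^] Suc k" for k
  proof (induction k)
    case 0 then show ?case using N_def fc x by simp
  next
    case (Suc k)
    have xk: "x [^] Suc k \<in> carrier R" using x by simp
    have "N [^] Suc (Suc k) = N [^] Suc k \<otimes> N" by simp
    also have "\<dots> = f \<otimes> x [^] Suc k \<otimes> (f \<otimes> x)" using Suc N_def by simp
    also have "\<dots> = f \<otimes> (x [^] Suc k \<otimes> f) \<otimes> x" using fc xk x by (simp add: m_assoc)
    also have "\<dots> = f \<otimes> (f \<otimes> x [^] Suc k) \<otimes> x" using fcent[OF xk] by simp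
    also have "\<dots> = (f \<otimes> f) \<otimes> (x [^] Suc k \<otimes> x)" using fc xk x by (simp add: m_assoc)
    also have "\<dots> = f \<otimes> x [^] Suc (Suc k)" using ff by simp
    finally show ?case .
  qed
  have "N [^] n = \<zero>" using Npow[of m] m fp p_def by simp
  then obtain G where G: "G \<in> carrier R" "(\<one> \<ominus> N) \<otimes> G = \<one>" using nilp_inv[OF Nc] by blast
  define q where "q = x [^] m \<otimes> b"
  have qc: "q \<in> carrier R" using q_def x nb(2) by simp
  define V where "V = x \<ominus> f"
  define W where "W = e \<otimes> q \<ominus> f \<otimes> G"
  have Vc: "V \<in> carrier R" using V_def x fc by simp
  have Wc: "W \<in> carrier R" using W_def ec qc fc G by simp
  have xF: "x = f \<oplus> V" using V_def x fc by algebra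
  have exp: "V \<otimes> W = (x \<otimes> e) \<otimes> q \<ominus> (x \<otimes> f) \<otimes> G \<ominus> (f \<otimes> e) \<otimes> q \<oplus> (f \<otimes> f) \<otimes> G"
    using V_def W_def x fc ec qc G by algebra
  have t1: "(x \<otimes> e) \<otimes> q = e"
  proof -
    have "(x \<otimes> e) \<otimes> q = (e \<otimes> x) \<otimes> q" using ecent[OF x] by simp
    also have "\<dots> = e \<otimes> ((x \<otimes> x [^] m) \<otimes> b)" using x ec nb(2) q_def by (simp add: m_assoc)
    also have "x \<otimes> x [^] m = p" using p_def m nat_pow_Suc2[OF x, of m] by simp
    finally show ?thesis using ee e_def by simp
  qed
  have t2: "f \<otimes> G \<ominus> (f \<otimes> x) \<otimes> G = f"
  proof -
    have "f \<otimes> ((\<one> \<ominus> N) \<otimes> G) = f \<otimes> G \<ominus> (f \<otimes> f) \<otimes> (x \<otimes> G)" using N_def fc x G(1) by algebra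
    hence "f = f \<otimes> G \<ominus> f \<otimes> (x \<otimes> G)" using G ff fc by simp
    thus ?thesis using fc x G by (simp add: m_assoc)
  qed
  have "V \<otimes> W = e \<ominus> (f \<otimes> x) \<otimes> G \<ominus> \<zero> \<otimes> q \<oplus> f \<otimes> G"
    using exp t1 fcent[OF x] fe ff by simp
  also have "\<dots> = e \<oplus> (f \<otimes> G \<ominus> (f \<otimes> x) \<otimes> G)" using ec fc x G qc by algebra
  also have "\<dots> = \<one>" using t2 f_def ec by (simp, algebra)
  finally have VW: "V \<otimes> W = \<one>" .
  have cen: "f \<otimes> y \<otimes> (\<one> \<ominus> f) = \<zero>" if y: "y \<in> carrier R" for y
  proof -
    have "f \<otimes> y \<otimes> (\<one> \<ominus> f) = y \<otimes> (f \<ominus> f \<otimes> f)" using fcent[OF y] y fc by (simp add: ring_simprules r_one)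
    thus ?thesis using ff y fc by (simp add: minus_eq r_neg)
  qed
  show ?thesis using fc Vc Wc xF VW cen by blast
qed

end


theorem theorem4p1:
  fixes R :: "('a, 'b) ring_scheme"
  assumes "ring R"
    and "abelian_ring (R Quot jacobson R)"
    and "pi_regular (R Quot jacobson R)"
  shows "feckly_clean R"
proof -
  interpret R: ring R by fact
  define J where "J = jacobson R"
  have Jid: "ideal J R" unfolding J_def by (rule R.jac_ideal)
  interpret J: ideal J R by (rule Jid)
  interpret S: ring "R Quot J" by (rule J.quotient_is_ring)
  interpret h: ring_hom_ring R "R Quot J" "a_r_coset R J" by (rule J.rcos_ring_hom_ring)
  have surj: "\<exists>x\<in>carrier R. Xq = a_r_coset R J x" if "Xq \<in> carrier (R Quot J)" for Xq
  proof -
    have "carrier (R Quot J) = (\<Union>x\<in>carrier R. {a_r_coset R J x})"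
      unfolding FactRing_def A_RCOSETS_def' by simp
    thus ?thesis using that by blast
  qed
  have hm: "a_r_coset R J (x \<ominus>\<^bsub>R\<^esub> y) = (a_r_coset R J x) \<ominus>\<^bsub>R Quot J\<^esub> (a_r_coset R J y)"
    if xy: "x \<in> carrier R" "y \<in> carrier R" for x y
  proof -
    have "a_r_coset R J (x \<ominus>\<^bsub>R\<^esub> y) = a_r_coset R J (x \<oplus>\<^bsub>R\<^esub> \<ominus>\<^bsub>R\<^esub> y)"
      by (simp only: R.minus_eq)
    also have "\<dots> = a_r_coset R J x \<oplus>\<^bsub>R Quot J\<^esub> a_r_coset R J (\<ominus>\<^bsub>R\<^esub> y)"
      by (rule h.hom_add[OF xy(1) R.a_inv_closed[OF xy(2)]])
    also have "a_r_coset R J (\<ominus>\<^bsub>R\<^esub> y) = \<ominus>\<^bsub>R Quot J\<^esub> a_r_coset R J y"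
      by (rule h.hom_a_inv[OF xy(2)])
    finally show ?thesis by (simp only: S.minus_eq)
  qed
  have ker: "x \<in> J" if "x \<in> carrier R" "a_r_coset R J x = \<zero>\<^bsub>R Quot J\<^esub>" for x
  proof -
    have "\<zero>\<^bsub>R Quot J\<^esub> = J" unfolding FactRing_def by simp
    thus ?thesis using J.rcos_const_imp_mem that by simp
  qed
  have "feckly_clean_elem R a" if a: "a \<in> carrier R" for a
  proof -
    let ?h = "a_r_coset R J"
    have Xq: "?h a \<in> carrier (R Quot J)" using a by simp
    obtain F V W where FVW: "F \<in> carrier (R Quot J)" "V \<in> carrier (R Quot J)" "W \<in> carrier (R Quot J)"
      "?h a = F \<oplus>\<^bsub>R Quot J\<^esub> V" "V \<otimes>\<^bsub>R Quot J\<^esub> W = \<one>\<^bsub>R Quot J\<^esub>"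
      "\<forall>y\<in>carrier (R Quot J). F \<otimes>\<^bsub>R Quot J\<^esub> y \<otimes>\<^bsub>R Quot J\<^esub> (\<one>\<^bsub>R Quot J\<^esub> \<ominus>\<^bsub>R Quot J\<^esub> F) = \<zero>\<^bsub>R Quot J\<^esub>"
      using S.decomp[OF assms(2,3)[folded J_def] Xq] by blast
    obtain e where e: "e \<in> carrier R" "F = ?h e" using surj[OF FVW(1)] by blast
    obtain w where w: "w \<in> carrier R" "W = ?h w" using surj[OF FVW(3)] by blast
    define u where "u = a \<ominus>\<^bsub>R\<^esub> e"
    have uc: "u \<in> carrier R" using u_def a e by simp
    have aeu: "a = e \<oplus>\<^bsub>R\<^esub> u" using u_def a e(1) by (simp add: R.minus_eq R.a_ac R.r_neg)
    have hu: "?h u = V"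
    proof -
      have "?h u = ?h a \<ominus>\<^bsub>R Quot J\<^esub> F" using hm[OF a e(1)] u_def e(2) by simp
      also have "\<dots> = (F \<oplus>\<^bsub>R Quot J\<^esub> V) \<ominus>\<^bsub>R Quot J\<^esub> F" using FVW(4) by simp
      also have "\<dots> = V" using FVW(1,2) by algebra
      finally show ?thesis .
    qed
    have "?h (\<one>\<^bsub>R\<^esub> \<ominus>\<^bsub>R\<^esub> u \<otimes>\<^bsub>R\<^esub> w) = \<zero>\<^bsub>R Quot J\<^esub>"
      using hm[of "\<one>\<^bsub>R\<^esub>" "u \<otimes>\<^bsub>R\<^esub> w"] uc w hu FVW(5) by (simp add: S.minus_eq S.r_neg)
    hence jJ: "\<one>\<^bsub>R\<^esub> \<ominus>\<^bsub>R\<^esub> u \<otimes>\<^bsub>R\<^esub> w \<in> J" using ker uc w by simp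
    define I where "I = Idl\<^bsub>R\<^esub> {u}"
    have Iid: "ideal I R" unfolding I_def using R.genideal_ideal uc by simp
    have uI: "u \<in> I" unfolding I_def using R.genideal_self' uc by simp
    have uwI: "u \<otimes>\<^bsub>R\<^esub> w \<in> I" using ideal.I_r_closed[OF Iid uI w(1)] .
    have Il: "left_ideal I R" unfolding left_ideal_def
      using Iid ideal.I_l_closed[OF Iid] ideal.axioms(1)[OF Iid] by blast
    have "\<one>\<^bsub>R\<^esub> \<in> I"
    proof (rule ccontr)
      assume "\<one>\<^bsub>R\<^esub> \<notin> I"
      then obtain M where M: "maximal_left_ideal M R" "I \<subseteq> M"
        using R.exists_maximal_left_ideal[OF Il] by blast
      have Ml: "left_ideal M R" using M unfolding maximal_left_ideal_def by blast
      have "\<one>\<^bsub>R\<^esub> \<ominus>\<^bsub>R\<^esub> u \<otimes>\<^bsub>R\<^esub> w \<in> M" using jJ M(1) unfolding J_def jacobson_def by blast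
      moreover have "u \<otimes>\<^bsub>R\<^esub> w \<in> M" using uwI M(2) by blast
      ultimately have "(\<one>\<^bsub>R\<^esub> \<ominus>\<^bsub>R\<^esub> u \<otimes>\<^bsub>R\<^esub> w) \<oplus>\<^bsub>R\<^esub> u \<otimes>\<^bsub>R\<^esub> w \<in> M"
        using R.left_idealD(3)[OF Ml] by blast
      moreover have "(\<one>\<^bsub>R\<^esub> \<ominus>\<^bsub>R\<^esub> u \<otimes>\<^bsub>R\<^esub> w) \<oplus>\<^bsub>R\<^esub> u \<otimes>\<^bsub>R\<^esub> w = \<one>\<^bsub>R\<^esub>"
        using uc w(1) by algebra
      ultimately have "M = carrier R" using R.left_ideal_one[OF Ml] by simp
      thus False using M(1) unfolding maximal_left_ideal_def by blast
    qed
    hence "I = carrier R" using R.left_ideal_one[OF Il] by simp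
    hence full: "full_elem R u" unfolding full_elem_def I_def using uc by simp
    have cond: "e \<otimes>\<^bsub>R\<^esub> r \<otimes>\<^bsub>R\<^esub> (\<one>\<^bsub>R\<^esub> \<ominus>\<^bsub>R\<^esub> e) \<in> jacobson R" if r: "r \<in> carrier R" for r
    proof -
      have "?h (e \<otimes>\<^bsub>R\<^esub> r \<otimes>\<^bsub>R\<^esub> (\<one>\<^bsub>R\<^esub> \<ominus>\<^bsub>R\<^esub> e))
          = F \<otimes>\<^bsub>R Quot J\<^esub> ?h r \<otimes>\<^bsub>R Quot J\<^esub> (\<one>\<^bsub>R Quot J\<^esub> \<ominus>\<^bsub>R Quot J\<^esub> F)"
        using hm[of "\<one>\<^bsub>R\<^esub>" e] e r by simp
      also have "\<dots> = \<zero>\<^bsub>R Quot J\<^esub>" using FVW(6) r by simp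
      finally show ?thesis using ker e r unfolding J_def by simp
    qed
    show ?thesis unfolding feckly_clean_elem_def using e(1) uc aeu full cond by blast
  qed
  thus ?thesis unfolding feckly_clean_def by blast
qed

end
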